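(* Let $T$ be a complete dependent (NIP) first-order theory with monster model $\mathfrak{C}$, $\zeta$ an ordinal, $n_* <\omega$, and for $n<n_*$ let $\varphi_n(\bar x_{[\zeta]},\bar y_n)$ be a formula. Let $\mathcal{D}$ be a proper filter on a set $I$ and $\bar a_t \in {}^\zeta\mathfrak{C}$ for $t\in I$. Then there are $k_*<\omega$ and a partition $\langle \mathcal{S}_k : k<k_*\rangle$ of $I$ such that: (a) $\mathcal{S}_k \in \mathcal{D}^+$ for each $k<k_*$; (b) for every $\ell<n_*$ and every $\bar b \in {}^{\ell g(\bar y_\ell)}\mathfrak{C}$ there are $k<k_*$ and a truth value $\mathbf t$ such that $\{t\in\mathcal{S}_k : \mathfrak{C}\models \varphi_\ell[\bar a_t,\bar b]^{\mathbf t}\} = \mathcal{S}_k \bmod \mathcal{D}$.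
   Context: $\bar x_{[\zeta]} = \langle x_i : i<\zeta\rangle$ (a formula uses only finitely many of these variables). $\mathcal{D}^+$ is the set of subsets of $I$ meeting every member of $\mathcal{D}$. For $X, Y \subseteq I$, "$X = Y \bmod \mathcal{D}$" means the symmetric difference of $X$ and $Y$ is disjoint from some member of $\mathcal{D}$. $\varphi^{\mathbf t}$ is $\varphi$ if $\mathbf t$ is true and $\neg\varphi$ otherwise. *)

theory Defs
  imports Main
begin

text \<open>Symbols are applied to argument lists (arity is not enforced;
this is a harmless generalisation of a first-order vocabulary).\<close>

datatype ('f, 'v) trm = Var 'v | Fn 'f "('f, 'v) trm list"

datatype ('f, 'r, 'v) fm =
    Eq "('f, 'v) trm" "('f, 'v) trm"
  | Rel 'r "('f, 'v) trm list"
  | Neg "('f, 'r, 'v) fm"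
  | Conj "('f, 'r, 'v) fm" "('f, 'r, 'v) fm"
  | Ex 'v "('f, 'r, 'v) fm"

text \<open>A structure with universe the whole type 'm: interpretations of the
function and relation symbols.\<close>

record ('f, 'r, 'm) struct =
  fn_int :: "'f \<Rightarrow> 'm list \<Rightarrow> 'm"
  rel_int :: "'r \<Rightarrow> 'm list \<Rightarrow> bool"

fun teval :: "('f, 'r, 'm) struct \<Rightarrow> ('v \<Rightarrow> 'm) \<Rightarrow> ('f, 'v) trm \<Rightarrow> 'm" where
  "teval M e (Var v) = e v"
| "teval M e (Fn f ts) = fn_int M f (map (teval M e) ts)"

fun sat :: "('f, 'r, 'm) struct \<Rightarrow> ('f, 'r, 'v) fm \<Rightarrow> ('v \<Rightarrow> 'm) \<Rightarrow> bool" where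
  "sat M (Eq s t) e = (teval M e s = teval M e t)"
| "sat M (Rel r ts) e = rel_int M r (map (teval M e) ts)"
| "sat M (Neg \<phi>) e = (\<not> sat M \<phi> e)"
| "sat M (Conj \<phi> \<psi>) e = (sat M \<phi> e \<and> sat M \<psi> e)"
| "sat M (Ex v \<phi>) e = (\<exists>m. sat M \<phi> (e(v := m)))"

definition merge :: "'v set \<Rightarrow> ('v \<Rightarrow> 'm) \<Rightarrow> ('v \<Rightarrow> 'm) \<Rightarrow> 'v \<Rightarrow> 'm" where
  "merge X a e v = (if v \<in> X then a v else e v)"

text \<open>Since this is
expressible by a sentence for each n, it is a property of the complete
theory Th(M), and it coincides with the usual notion in the monster model.\<close>

definition has_IP :: "('f, 'r, 'm) struct \<Rightarrow> ('f, 'r, nat) fm \<Rightarrow> nat set \<Rightarrow> bool" where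
  "has_IP M \<psi> X = (\<forall>n. \<exists>A :: nat \<Rightarrow> nat \<Rightarrow> 'm. \<forall>S \<subseteq> {..<n}. \<exists>e :: nat \<Rightarrow> 'm.
       \<forall>i<n. (sat M \<psi> (merge X (A i) e) \<longleftrightarrow> i \<in> S))"

definition dependent :: "('f, 'r, 'm) struct \<Rightarrow> bool" where
  "dependent M = (\<forall>\<psi> X. \<not> has_IP M \<psi> X)"

text \<open>A filter on the set I is represented by a HOL filter D on the type 't
(I = UNIV); it is proper iff D \<noteq> bot.\<close>

definition in_filter :: "'t filter \<Rightarrow> 't set \<Rightarrow> bool" where
  "in_filter D X = eventually (\<lambda>t. t \<in> X) D"

definition pos_set :: "'t filter \<Rightarrow> 't set \<Rightarrow> bool" where
  "pos_set D X = (\<forall>Y. in_filter D Y \<longrightarrow> X \<inter> Y \<noteq> {})"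

definition eq_mod :: "'t filter \<Rightarrow> 't set \<Rightarrow> 't set \<Rightarrow> bool" where
  "eq_mod D X Y = (\<exists>Z. in_filter D Z \<and> ((X - Y) \<union> (Y - X)) \<inter> Z = {})"

definition asg :: "('i \<Rightarrow> 'm) \<Rightarrow> (nat \<Rightarrow> 'm) \<Rightarrow> 'i + nat \<Rightarrow> 'm" where
  "asg a b v = (case v of Inl i \<Rightarrow> a i | Inr j \<Rightarrow> b j)"

end

theory Submission
  imports Defs
begin

fun trename :: "('v \<Rightarrow> 'w) \<Rightarrow> ('f,'v) trm \<Rightarrow> ('f,'w) trm" where
  "trename g (Var v) = Var (g v)"
| "trename g (Fn f ts) = Fn f (map (trename g) ts)"

fun tvars :: "('f,'v) trm \<Rightarrow> 'v set" where
  "tvars (Var v) = {v}"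
| "tvars (Fn f ts) = \<Union>(set (map tvars ts))"

fun frename :: "('v \<Rightarrow> 'w) \<Rightarrow> ('f,'r,'v) fm \<Rightarrow> ('f,'r,'w) fm" where
  "frename g (Eq s t) = Eq (trename g s) (trename g t)"
| "frename g (Rel r ts) = Rel r (map (trename g) ts)"
| "frename g (Neg p) = Neg (frename g p)"
| "frename g (Conj p q) = Conj (frename g p) (frename g q)"
| "frename g (Ex v p) = Ex (g v) (frename g p)"

fun fvars :: "('f,'r,'v) fm \<Rightarrow> 'v set" where
  "fvars (Eq s t) = tvars s \<union> tvars t"
| "fvars (Rel r ts) = \<Union>(set (map tvars ts))"
| "fvars (Neg p) = fvars p"
| "fvars (Conj p q) = fvars p \<union> fvars q"
| "fvars (Ex v p) = insert v (fvars p)"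

lemma teval_rename: "teval M e (trename g t) = teval M (e \<circ> g) t"
  by (induction t) (auto cong: map_cong)

lemma teval_cong: "(\<forall>v\<in>tvars t. e v = e' v) \<Longrightarrow> teval M e t = teval M e' t"
  by (induction t) (auto cong: map_cong)

lemma finite_tvars: "finite (tvars t)"
  by (induction t) (auto cong: map_cong)

lemma finite_fvars: "finite (fvars p)"
  by (induction p) (auto simp: finite_tvars)

lemma sat_cong: "(\<forall>v\<in>fvars p. e v = e' v) \<Longrightarrow> sat M p e = sat M p e'"
proof (induction p arbitrary: e e')
  case (Eq s t) then show ?case using teval_cong[of s e e' M] teval_cong[of t e e' M] by auto
next
  case (Rel r ts)
  have "map (teval M e) ts = map (teval M e') ts"
    using Rel by (auto intro!: teval_cong map_cong)
  then show ?case by (simp del: map_eq_conv)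
next
  case (Ex v p)
  have "\<And>m. sat M p (e(v:=m)) = sat M p (e'(v:=m))"
    using Ex.prems by (intro Ex.IH) auto
  then show ?case by simp
next
  case (Conj p q)
  have "sat M p e = sat M p e'" "sat M q e = sat M q e'"
    using Conj.prems by (auto intro!: Conj.IH)
  then show ?case by simp
qed auto

lemma sat_rename: "inj_on g (fvars p) \<Longrightarrow> sat M (frename g p) e = sat M p (e \<circ> g)"
proof (induction p arbitrary: e)
  case (Rel r ts)
  then show ?case by (simp add: teval_rename comp_def)
next
  case (Ex v p)
  have "\<And>m. sat M (frename g p) (e(g v:=m)) = sat M p ((e \<circ> g)(v:=m))"
  proof -
    fix m
    have "sat M (frename g p) (e(g v:=m)) = sat M p (e(g v:=m) \<circ> g)"
      using Ex by (intro Ex.IH) (auto intro: inj_on_subset)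
    also have "\<dots> = sat M p ((e \<circ> g)(v:=m))"
      using Ex.prems by (intro sat_cong) (auto simp: inj_on_def)
    finally show "sat M (frename g p) (e(g v:=m)) = sat M p ((e \<circ> g)(v:=m))" .
  qed
  then show ?case by (simp add: comp_def)
qed (auto simp: teval_rename inj_on_Un)

definition part :: "'t filter \<Rightarrow> 't set set \<Rightarrow> bool" where
  "part D P = (finite P \<and> \<Union>P = UNIV \<and> (\<forall>S\<in>P. \<forall>S'\<in>P. S \<noteq> S' \<longrightarrow> S \<inter> S' = {})
      \<and> (\<forall>S\<in>P. pos_set D S))"

definition refines :: "'t set set \<Rightarrow> 't set set \<Rightarrow> bool" where
  "refines Q P = (\<forall>S\<in>Q. \<exists>S'\<in>P. S \<subseteq> S')"

definition good :: "'t filter \<Rightarrow> 't set set \<Rightarrow> 't set \<Rightarrow> bool" where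
  "good D P X = (\<exists>S\<in>P. \<not> pos_set D (S \<inter> X) \<or> \<not> pos_set D (S - X))"

definition finVC :: "'t set set \<Rightarrow> bool" where
  "finVC F = (\<not> (\<forall>N. \<exists>Xs. length Xs = N \<and> set Xs \<subseteq> F \<and>
        (\<forall>\<sigma>::nat\<Rightarrow>bool. \<exists>t. \<forall>j<N. (t \<in> Xs!j) = \<sigma> j)))"

lemma pos_mono: "pos_set D A \<Longrightarrow> A \<subseteq> B \<Longrightarrow> pos_set D B"
  unfolding pos_set_def by blast

lemma pos_nonempty: "pos_set D A \<Longrightarrow> A \<noteq> {}"
proof -
  assume p: "pos_set D A"
  have "in_filter D UNIV" by (simp add: in_filter_def)
  then have "A \<inter> UNIV \<noteq> {}" using p unfolding pos_set_def by blast
  then show ?thesis by simp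
qed

lemma pos_UNIV: "D \<noteq> bot \<Longrightarrow> pos_set D UNIV"
  unfolding pos_set_def in_filter_def
proof (intro allI impI)
  fix Y assume D: "D \<noteq> bot" and "eventually (\<lambda>t. t \<in> Y) D"
  show "UNIV \<inter> Y \<noteq> {}"
  proof
    assume "UNIV \<inter> Y = {}"
    then have "Y = {}" by simp
    then have "eventually (\<lambda>t. False) D" using \<open>eventually (\<lambda>t. t \<in> Y) D\<close> by simp
    then show False using D by (simp add: eventually_False)
  qed
qed

lemma refines_trans: "refines Q P \<Longrightarrow> refines P P0 \<Longrightarrow> refines Q P0"
  unfolding refines_def by (meson order_trans)

lemma part_R:
  assumes "part D P" "\<forall>S\<in>P. pos_set D (S \<inter> X) \<and> pos_set D (S - X)"
  shows "part D ((\<lambda>S. S \<inter> X) ` P \<union> (\<lambda>S. S - X) ` P)"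
proof -
  have U: "\<Union>((\<lambda>S. S \<inter> X) ` P \<union> (\<lambda>S. S - X) ` P) = UNIV"
  proof
    show "UNIV \<subseteq> \<Union>((\<lambda>S. S \<inter> X) ` P \<union> (\<lambda>S. S - X) ` P)"
    proof
      fix t assume "t \<in> (UNIV::'a set)"
      have "t \<in> \<Union>P" using assms(1) unfolding part_def by simp
      then obtain S where "S \<in> P" "t \<in> S" by auto
      then show "t \<in> \<Union>((\<lambda>S. S \<inter> X) ` P \<union> (\<lambda>S. S - X) ` P)" by (cases "t \<in> X") auto
    qed
  qed simp
  have d: "\<And>S S'. S\<in>P \<Longrightarrow> S'\<in>P \<Longrightarrow> S \<noteq> S' \<Longrightarrow> S \<inter> S' = {}" using assms(1) unfolding part_def by simp
  have fin: "finite P" using assms(1) unfolding part_def by simp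
  have disj: "\<forall>A\<in>((\<lambda>S. S \<inter> X) ` P \<union> (\<lambda>S. S - X) ` P). \<forall>B\<in>((\<lambda>S. S \<inter> X) ` P \<union> (\<lambda>S. S - X) ` P).
       A \<noteq> B \<longrightarrow> A \<inter> B = {}"
  proof (intro ballI impI)
    fix A B assume A: "A \<in> (\<lambda>S. S \<inter> X) ` P \<union> (\<lambda>S. S - X) ` P"
      and B: "B \<in> (\<lambda>S. S \<inter> X) ` P \<union> (\<lambda>S. S - X) ` P" and ne: "A \<noteq> B"
    from A obtain S where S: "S \<in> P" "A = S \<inter> X \<or> A = S - X" by auto
    from B obtain S' where S': "S' \<in> P" "B = S' \<inter> X \<or> B = S' - X" by auto
    show "A \<inter> B = {}"
    proof (cases "S = S'")
      case True then show ?thesis using S S' ne by auto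
    next
      case False then have "S \<inter> S' = {}" using d S(1) S'(1) by simp
      then show ?thesis using S(2) S'(2) by auto
    qed
  qed
  have pos: "\<forall>A\<in>((\<lambda>S. S \<inter> X) ` P \<union> (\<lambda>S. S - X) ` P). pos_set D A"
  proof
    fix A assume "A \<in> (\<lambda>S. S \<inter> X) ` P \<union> (\<lambda>S. S - X) ` P"
    then obtain S where "S \<in> P" "A = S \<inter> X \<or> A = S - X" by blast
    then show "pos_set D A" using assms(2) by blast
  qed
  have f2: "finite ((\<lambda>S. S \<inter> X) ` P \<union> (\<lambda>S. S - X) ` P)" using fin by simp
  show ?thesis unfolding part_def by (intro conjI f2 U disj pos)
qed

lemma R_refines: "refines ((\<lambda>S. S \<inter> X) ` P \<union> (\<lambda>S. S - X) ` P) P"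
  unfolding refines_def by auto

lemma good_refine:
  assumes "good D P X" "refines Q P" "part D Q" "part D P"
  shows "good D Q X"
proof -
  obtain S where S: "S \<in> P" "\<not> pos_set D (S \<inter> X) \<or> \<not> pos_set D (S - X)"
    using assms(1) unfolding good_def by auto
  have "pos_set D S" using assms(4) S(1) unfolding part_def by simp
  then have "S \<noteq> {}" by (rule pos_nonempty)
  then obtain t where t: "t \<in> S" by auto
  have "t \<in> \<Union>Q" using assms(3) unfolding part_def by simp
  then obtain Q0 where Q0: "Q0 \<in> Q" "t \<in> Q0" by auto
  then obtain S' where S': "S' \<in> P" "Q0 \<subseteq> S'" using assms(2) unfolding refines_def by auto
  have "S' \<inter> S \<noteq> {}" using t Q0(2) S'(2) by auto
  moreover have "\<And>A B. A\<in>P \<Longrightarrow> B\<in>P \<Longrightarrow> A \<noteq> B \<Longrightarrow> A \<inter> B = {}" using assms(4) unfolding part_def by simp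
  ultimately have "S' = S" using S(1) S'(1) by blast
  then have "Q0 \<subseteq> S" using S'(2) by simp
  then have "Q0 \<inter> X \<subseteq> S \<inter> X" "Q0 - X \<subseteq> S - X" by auto
  then have "\<not> pos_set D (Q0 \<inter> X) \<or> \<not> pos_set D (Q0 - X)"
    using S(2) pos_mono by metis
  then show ?thesis using Q0 unfolding good_def by auto
qed

lemma core:
  assumes fin: "finVC F" and P0: "part D P0"
  shows "\<exists>Q. part D Q \<and> refines Q P0 \<and> (\<forall>X\<in>F. good D Q X)"
proof (rule ccontr)
  assume H: "\<not> ?thesis"
  have step: "\<exists>Xs Q. length Xs = N \<and> set Xs \<subseteq> F \<and> part D Q \<and> refines Q P0 \<and>
          (\<forall>\<sigma>::nat\<Rightarrow>bool. \<exists>S\<in>Q. \<forall>t\<in>S. \<forall>j<N. (t \<in> Xs!j) = \<sigma> j)" for N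
  proof (induction N)
    case 0
    have "\<Union>P0 = UNIV" using P0 unfolding part_def by simp
    then have "P0 \<noteq> {}" by auto
    moreover have "refines P0 P0" unfolding refines_def by auto
    ultimately show ?case using P0 by (intro exI[of _ "[]"] exI[of _ P0]) auto
  next
    case (Suc N)
    then obtain Xs Q where IH: "length Xs = N" "set Xs \<subseteq> F" "part D Q" "refines Q P0"
        "\<forall>\<sigma>::nat\<Rightarrow>bool. \<exists>S\<in>Q. \<forall>t\<in>S. \<forall>j<N. (t \<in> Xs!j) = \<sigma> j" by blast
    then obtain X where X: "X \<in> F" "\<not> good D Q X" using H by blast
    then have spl: "\<forall>S\<in>Q. pos_set D (S \<inter> X) \<and> pos_set D (S - X)" unfolding good_def by blast
    define Q' where "Q' = (\<lambda>S. S \<inter> X) ` Q \<union> (\<lambda>S. S - X) ` Q"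
    have "part D Q'" unfolding Q'_def using part_R[OF IH(3) spl] .
    moreover have "refines Q' P0" unfolding Q'_def using refines_trans[OF R_refines IH(4)] .
    moreover have "\<forall>\<sigma>::nat\<Rightarrow>bool. \<exists>S\<in>Q'. \<forall>t\<in>S. \<forall>j<Suc N. (t \<in> (Xs@[X])!j) = \<sigma> j"
    proof
      fix \<sigma> :: "nat \<Rightarrow> bool"
      obtain S where S: "S \<in> Q" "\<forall>t\<in>S. \<forall>j<N. (t \<in> Xs!j) = \<sigma> j" using IH(5) by blast
      define S2 where "S2 = (if \<sigma> N then S \<inter> X else S - X)"
      have "S2 \<in> Q'" unfolding Q'_def S2_def using S(1) by auto
      moreover have "\<forall>t\<in>S2. \<forall>j<Suc N. (t \<in> (Xs@[X])!j) = \<sigma> j"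
      proof (intro ballI allI impI)
        fix t j assume t: "t \<in> S2" and j: "j < Suc N"
        show "(t \<in> (Xs@[X])!j) = \<sigma> j"
        proof (cases "j < N")
          case True
          have "t \<in> S" using t unfolding S2_def by (auto split: if_splits)
          then show ?thesis using S(2) True IH(1) by (simp add: nth_append)
        next
          case False then have "j = N" using j by simp
          then show ?thesis using t IH(1) unfolding S2_def by (auto simp: nth_append split: if_splits)
        qed
      qed
      ultimately show "\<exists>S\<in>Q'. \<forall>t\<in>S. \<forall>j<Suc N. (t \<in> (Xs@[X])!j) = \<sigma> j" by blast
    qed
    moreover have "length (Xs@[X]) = Suc N" "set (Xs@[X]) \<subseteq> F" using IH(1,2) X(1) by auto
    ultimately show ?case by blast
  qed
  have "\<exists>Xs. length Xs = N \<and> set Xs \<subseteq> F \<and> (\<forall>\<sigma>::nat\<Rightarrow>bool. \<exists>t. \<forall>j<N. (t \<in> Xs!j) = \<sigma> j)" for N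
  proof -
    obtain Xs Q where A: "length Xs = N" "set Xs \<subseteq> F" "part D Q"
      "\<forall>\<sigma>::nat\<Rightarrow>bool. \<exists>S\<in>Q. \<forall>t\<in>S. \<forall>j<N. (t \<in> Xs!j) = \<sigma> j"
      using step[of N] by blast
    have "\<forall>\<sigma>::nat\<Rightarrow>bool. \<exists>t. \<forall>j<N. (t \<in> Xs!j) = \<sigma> j"
    proof
      fix \<sigma> :: "nat \<Rightarrow> bool"
      obtain S where S: "S \<in> Q" "\<forall>t\<in>S. \<forall>j<N. (t \<in> Xs!j) = \<sigma> j" using A(4) by blast
      have "pos_set D S" using A(3) S(1) unfolding part_def by simp
      then have "S \<noteq> {}" by (rule pos_nonempty)
      then show "\<exists>t. \<forall>j<N. (t \<in> Xs!j) = \<sigma> j" using S(2) by blast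
    qed
    then show ?thesis using A by blast
  qed
  then show False using fin unfolding finVC_def by blast
qed

lemma nip:
  fixes M :: "('f,'r,'m) struct" and \<phi> :: "('f,'r,'i+nat) fm" and a :: "'t \<Rightarrow> 'i \<Rightarrow> 'm"
  assumes dep: "dependent M"
  shows "finVC {X. \<exists>b. X = {t. sat M \<phi> (asg (a t) b)}}"
proof (rule ccontr)
  let ?F = "{X. \<exists>b. X = {t. sat M \<phi> (asg (a t) b)}}"
  assume "\<not> finVC ?F"
  then have big: "\<forall>N. \<exists>Xs. length Xs = N \<and> set Xs \<subseteq> ?F \<and>
        (\<forall>\<sigma>::nat\<Rightarrow>bool. \<exists>t. \<forall>j<N. (t \<in> Xs!j) = \<sigma> j)" unfolding finVC_def by blast
  define Vi where "Vi = Inl -` fvars \<phi>"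
  have "finite Vi" unfolding Vi_def using finite_fvars by (rule finite_vimageI) simp
  then obtain h :: "'i \<Rightarrow> nat" and n0 where hinj: "inj_on h Vi"
    using finite_imp_inj_to_nat_seg by blast
  define g :: "'i + nat \<Rightarrow> nat" where "g v = (case v of Inl i \<Rightarrow> 2 * h i + 1 | Inr j \<Rightarrow> 2 * j)" for v
  have ginj: "inj_on g (fvars \<phi>)"
  proof (rule inj_onI)
    fix x y assume x: "x \<in> fvars \<phi>" and y: "y \<in> fvars \<phi>" and e: "g x = g y"
    show "x = y"
    proof (cases x; cases y)
      fix i i' assume "x = Inl i" "y = Inl i'"
      then show "x = y" using x y e hinj unfolding g_def Vi_def inj_on_def by auto
    next
      fix i j assume "x = Inl i" "y = Inr j"
      then have "2 * h i + 1 = 2 * j" using e unfolding g_def by simp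
      then have "(2 * h i + 1) mod 2 = (2 * j) mod 2" by simp
      then have False by simp
      then show "x = y" ..
    next
      fix i j assume "x = Inr j" "y = Inl i"
      then have "2 * h i + 1 = 2 * j" using e unfolding g_def by simp
      then have "(2 * h i + 1) mod 2 = (2 * j) mod 2" by simp
      then have False by simp
      then show "x = y" ..
    next
      fix i j assume "x = Inr i" "y = Inr j"
      then show "x = y" using e unfolding g_def by simp
    qed
  qed
  define \<psi> where "\<psi> = frename g \<phi>"
  have "has_IP M \<psi> {v. even v}"
    unfolding has_IP_def
  proof
    fix n
    obtain Xs where XsC: "length Xs = n \<and> set Xs \<subseteq> ?F \<and>
        (\<forall>\<sigma>::nat\<Rightarrow>bool. \<exists>t. \<forall>j<n. (t \<in> Xs!j) = \<sigma> j)" using big[THEN spec, of n] ..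
    note Xs = conjunct1[OF XsC] conjunct1[OF conjunct2[OF XsC]] conjunct2[OF conjunct2[OF XsC]]
    define B where "B j = (SOME b. Xs!j = {t. sat M \<phi> (asg (a t) b)})" for j
    have hB: "Xs!j = {t. sat M \<phi> (asg (a t) (B j))}" if "j < n" for j
    proof -
      have "Xs!j \<in> set Xs" using that Xs(1) by simp
      then have "Xs!j \<in> ?F" using Xs(2) by (rule rev_subsetD)
      then have "\<exists>b. Xs!j = {t. sat M \<phi> (asg (a t) b)}" by (simp only: mem_Collect_eq)
      then show ?thesis unfolding B_def by (rule someI_ex[where P="\<lambda>b. Xs!j = {t. sat M \<phi> (asg (a t) b)}"])
    qed
    define A where "A j v = B j (v div 2)" for j v
    show "\<exists>A :: nat \<Rightarrow> nat \<Rightarrow> 'm. \<forall>S \<subseteq> {..<n}. \<exists>e :: nat \<Rightarrow> 'm.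
       \<forall>i<n. (sat M \<psi> (merge {v. even v} (A i) e) \<longleftrightarrow> i \<in> S)"
    proof (intro exI[of _ A] allI impI)
      fix S :: "nat set" assume "S \<subseteq> {..<n}"
      have "\<exists>t. \<forall>j<n. (t \<in> Xs!j) = (j \<in> S)" using spec[OF Xs(3), of "\<lambda>j. j \<in> S"] by simp
      then obtain t where t: "\<forall>j<n. (t \<in> Xs!j) = (j \<in> S)" ..
      define e where "e v = a t (inv_into Vi h ((v - 1) div 2))" for v
      show "\<exists>e. \<forall>i<n. (sat M \<psi> (merge {v. even v} (A i) e) \<longleftrightarrow> i \<in> S)"
      proof (intro exI[of _ e] allI impI)
        fix i assume i: "i < n"
        have "sat M \<psi> (merge {v. even v} (A i) e) = sat M \<phi> (merge {v. even v} (A i) e \<circ> g)"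
          unfolding \<psi>_def using ginj by (rule sat_rename)
        also have "\<dots> = sat M \<phi> (asg (a t) (B i))"
        proof (rule sat_cong, rule ballI)
          fix v assume v: "v \<in> fvars \<phi>"
          show "(merge {v. even v} (A i) e \<circ> g) v = asg (a t) (B i) v"
          proof (cases v)
            case (Inl i')
            then have "i' \<in> Vi" using v unfolding Vi_def by simp
            have "\<not> even (2 * h i' + 1)" by simp
            moreover have "(2 * h i' + 1 - 1) div 2 = h i'" by simp
            ultimately show ?thesis using Inl inv_into_f_f[OF hinj \<open>i' \<in> Vi\<close>]
              by (simp add: merge_def g_def e_def asg_def)
          next
            case (Inr j)
            then show ?thesis by (simp add: merge_def g_def A_def asg_def)
          qed
        qed
        also have "\<dots> = (t \<in> Xs!i)" using hB[OF i] by simp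
        also have "\<dots> = (i \<in> S)" using t i by simp
        finally show "sat M \<psi> (merge {v. even v} (A i) e) \<longleftrightarrow> i \<in> S" .
      qed
    qed
  qed
  then show False using dep unfolding dependent_def by simp
qed

lemma exists_part:
  fixes M :: "('f, 'r, 'm) struct"
    and \<phi> :: "nat \<Rightarrow> ('f, 'r, 'i + nat) fm"
    and D :: "'t filter"
    and a :: "'t \<Rightarrow> 'i \<Rightarrow> 'm"
  assumes dep: "dependent M" and D: "D \<noteq> bot"
  shows "\<exists>P. part D P \<and> (\<forall>l<n. \<forall>b. good D P {t. sat M (\<phi> l) (asg (a t) b)})"
proof (induction n)
  case 0
  have "part D {UNIV}" unfolding part_def using pos_UNIV[OF D] by simp
  then show ?case by auto
next
  case (Suc n)
  then obtain P where P: "part D P" "\<forall>l<n. \<forall>b. good D P {t. sat M (\<phi> l) (asg (a t) b)}" by auto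
  have "finVC {X. \<exists>b. X = {t. sat M (\<phi> n) (asg (a t) b)}}" using nip[OF dep] .
  from core[OF this P(1)] obtain Q where Q: "part D Q" "refines Q P"
    "\<forall>X\<in>{X. \<exists>b. X = {t. sat M (\<phi> n) (asg (a t) b)}}. good D Q X" by auto
  have "\<forall>l<Suc n. \<forall>b. good D Q {t. sat M (\<phi> l) (asg (a t) b)}"
  proof (intro allI impI)
    fix l b assume l: "l < Suc n"
    show "good D Q {t. sat M (\<phi> l) (asg (a t) b)}"
    proof (cases "l < n")
      case True
      then have "good D P {t. sat M (\<phi> l) (asg (a t) b)}" using P(2) by simp
      then show ?thesis using good_refine Q(2,1) P(1) by blast
    next
      case False then have "l = n" using l by simp
      then show ?thesis using Q(3) by auto
    qed
  qed
  then show ?case using Q(1) by auto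
qed

theorem claim8p1:
  fixes M :: "('f, 'r, 'm) struct"
    and n_star :: nat
    and \<phi> :: "nat \<Rightarrow> ('f, 'r, 'i + nat) fm"
    and D :: "'t filter"
    and a :: "'t \<Rightarrow> 'i \<Rightarrow> 'm"
  assumes "dependent M"
    and "D \<noteq> bot"
  shows "\<exists>(k_star :: nat) (S :: nat \<Rightarrow> 't set).
           (\<forall>k<k_star. \<forall>k'<k_star. k \<noteq> k' \<longrightarrow> S k \<inter> S k' = {}) \<and>
           (\<Union>k<k_star. S k) = UNIV \<and>
           (\<forall>k<k_star. pos_set D (S k)) \<and>
           (\<forall>l<n_star. \<forall>b :: nat \<Rightarrow> 'm. \<exists>k<k_star. \<exists>tv :: bool.
              eq_mod D {t \<in> S k. sat M (\<phi> l) (asg (a t) b) = tv} (S k))"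
proof -
  obtain P where P: "part D P" "\<forall>l<n_star. \<forall>b. good D P {t. sat M (\<phi> l) (asg (a t) b)}"
    using exists_part[OF assms, of n_star \<phi> a] by blast
  have "finite P" using P(1) unfolding part_def by simp
  then obtain xs where xs: "set xs = P" "distinct xs" using finite_distinct_list by blast
  have d: "\<And>A B. A\<in>P \<Longrightarrow> B\<in>P \<Longrightarrow> A \<noteq> B \<Longrightarrow> A \<inter> B = {}" using P(1) unfolding part_def by simp
  have U: "\<Union>P = UNIV" using P(1) unfolding part_def by simp
  have ps: "\<And>A. A\<in>P \<Longrightarrow> pos_set D A" using P(1) unfolding part_def by simp
  have c1: "\<forall>k<length xs. \<forall>k'<length xs. k \<noteq> k' \<longrightarrow> xs!k \<inter> xs!k' = {}"
  proof (intro allI impI)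
    fix k k' assume "k < length xs" "k' < length xs" "k \<noteq> k'"
    then have "xs!k \<noteq> xs!k'" "xs!k \<in> P" "xs!k' \<in> P" using xs nth_eq_iff_index_eq by auto
    then show "xs!k \<inter> xs!k' = {}" using d by simp
  qed
  have "(\<Union>k<length xs. xs!k) = \<Union>(set xs)"
    by (simp add: set_conv_nth lessThan_def image_def) (metis)
  then have c2: "(\<Union>k<length xs. xs!k) = UNIV" using U xs(1) by simp
  have c3: "\<forall>k<length xs. pos_set D (xs!k)" using ps xs(1) by auto
  have c4: "\<forall>l<n_star. \<forall>b :: nat \<Rightarrow> 'm. \<exists>k<length xs. \<exists>tv :: bool.
              eq_mod D {t \<in> xs!k. sat M (\<phi> l) (asg (a t) b) = tv} (xs!k)"
  proof (intro allI impI)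
    fix l and b :: "nat \<Rightarrow> 'm" assume l: "l < n_star"
    define X where "X = {t. sat M (\<phi> l) (asg (a t) b)}"
    have "good D P X" using P(2) l unfolding X_def by simp
    then obtain S where S: "S \<in> P" "\<not> pos_set D (S \<inter> X) \<or> \<not> pos_set D (S - X)"
      unfolding good_def by auto
    obtain k where k: "k < length xs" "xs!k = S" using S(1) xs(1) by (auto simp: in_set_conv_nth)
    show "\<exists>k<length xs. \<exists>tv :: bool. eq_mod D {t \<in> xs!k. sat M (\<phi> l) (asg (a t) b) = tv} (xs!k)"
    proof (cases "pos_set D (S - X)")
      case False
      then obtain Y where Y: "in_filter D Y" "(S - X) \<inter> Y = {}" unfolding pos_set_def by auto
      have "eq_mod D {t \<in> S. sat M (\<phi> l) (asg (a t) b) = True} S"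
        unfolding eq_mod_def using Y unfolding X_def by (intro exI[of _ Y]) auto
      then have "eq_mod D {t \<in> xs!k. sat M (\<phi> l) (asg (a t) b) = True} (xs!k)" using k by simp
      then show ?thesis using k(1) by blast
    next
      case True
      then have "\<not> pos_set D (S \<inter> X)" using S(2) by simp
      then obtain Y where Y: "in_filter D Y" "(S \<inter> X) \<inter> Y = {}" unfolding pos_set_def by auto
      have "eq_mod D {t \<in> S. sat M (\<phi> l) (asg (a t) b) = False} S"
        unfolding eq_mod_def using Y unfolding X_def by (intro exI[of _ Y]) auto
      then have "eq_mod D {t \<in> xs!k. sat M (\<phi> l) (asg (a t) b) = False} (xs!k)" using k by simp
      then show ?thesis using k(1) by blast
    qed
  qed
  show ?thesis
    by (rule exI[of _ "length xs"], rule exI[of _ "\<lambda>k. xs!k"]) (intro conjI c1 c2 c3 c4)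
qed

end
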